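(* For each integer $q\ge2$, let $\rho_q$ be the unique number in $(0,1)$ satisfying $\rho_q+\rho_q^2+\dots+\rho_q^{q-1}=\frac{q-1}{3}(1+2\rho_q^q)$, and let $\gamma_q:=\ln(1-\rho_q^q)-\ln(1-\rho_q)-\frac{q-1}{3}\ln(\rho_q)$. Then $\lim_{q\to\infty}\frac{\gamma_q}{\ln q}=1$. *)

theory Defs
  imports "HOL-Analysis.Analysis"
begin

definition rho :: "nat \<Rightarrow> real" where
  "rho q = (THE x. 0 < x \<and> x < 1 \<and>
      (\<Sum>i=1..q-1. x ^ i) = (real q - 1) / 3 * (1 + 2 * x ^ q))"

definition gamma :: "nat \<Rightarrow> real" where
  "gamma q = ln (1 - rho q ^ q) - ln (1 - rho q) - (real q - 1) / 3 * ln (rho q)"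

end

theory Submission
  imports Defs "HOL-Real_Asymp.Real_Asymp"
begin

definition P :: "nat \<Rightarrow> real \<Rightarrow> real" where
  "P n x = (\<Sum>j=0..n. (3 * real j - real n) * x ^ j)"

lemma geo: "(1 - x) * (\<Sum>i=1..n. x ^ i) = x - x ^ Suc n" for x :: real
proof (induction n)
  case (Suc n)
  have "(1 - x) * (\<Sum>i=1..Suc n. x ^ i) = (1 - x) * (\<Sum>i=1..n. x ^ i) + (1 - x) * x ^ Suc n"
    by (simp add: distrib_left)
  also have "\<dots> = (x - x ^ Suc n) + (1 - x) * x ^ Suc n" by (simp only: Suc.IH)
  also have "\<dots> = x - x ^ Suc (Suc n)" by (simp add: algebra_simps)
  finally show ?case .
qed simp

lemma P_Suc: "P (Suc n) x = P n x - (\<Sum>j=0..n. x ^ j) + (2 * real n + 2) * x ^ Suc n"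
  unfolding P_def by (simp add: sum.distrib sum_subtractf algebra_simps)

lemma geo0: "(1 - x) * (\<Sum>j=0..n. x ^ j) = 1 - x ^ Suc n" for x :: real
proof (induction n)
  case (Suc n)
  have "(1 - x) * (\<Sum>j=0..Suc n. x ^ j) = (1 - x) * (\<Sum>j=0..n. x ^ j) + (1 - x) * x ^ Suc n"
    by (simp add: distrib_left)
  also have "\<dots> = (1 - x ^ Suc n) + (1 - x) * x ^ Suc n" by (simp only: Suc.IH)
  also have "\<dots> = 1 - x ^ Suc (Suc n)" by (simp add: algebra_simps)
  finally show ?case .
qed simp

lemma Fid: "3 * (\<Sum>i=1..n. x ^ i) - real n * (1 + 2 * x ^ Suc n) = (1 - x) * P n x"
proof (induction n)
  case 0
  then show ?case by (simp add: P_def)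
next
  case (Suc n)
  have "(1 - x) * P (Suc n) x = (1 - x) * P n x - (1 - x ^ Suc n) + (1 - x) * (2 * real n + 2) * x ^ Suc n"
    unfolding P_Suc geo0[symmetric] by algebra
  also have "\<dots> = 3 * (\<Sum>i=1..n. x ^ i) - real n * (1 + 2 * x ^ Suc n) - (1 - x ^ Suc n) + (1 - x) * (2 * real n + 2) * x ^ Suc n"
    by (simp only: Suc.IH)
  finally show ?case by (simp add: algebra_simps)
qed

lemma term_le:
  fixes x z :: real
  assumes "0 < x" "x < z" "m = (n+2) div 3"
  shows "(3 * real j - real n) * (z ^ m * x ^ j - x ^ m * z ^ j) \<le> 0"
proof (cases "j < m")
  case True
  then obtain d where d: "m = j + d" "d > 0" by (metis less_imp_add_positive)
  have c: "3 * j < n" using True assms(3) by presburger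
  have "x ^ d \<le> z ^ d" using assms by (intro power_mono) auto
  hence "x ^ j * z ^ j * x ^ d \<le> x ^ j * z ^ j * z ^ d" using assms by (intro mult_left_mono) auto
  hence "0 \<le> z ^ m * x ^ j - x ^ m * z ^ j" unfolding d by (simp add: power_add algebra_simps)
  moreover have "3 * real j - real n < 0" using c by linarith
  ultimately show ?thesis by (simp add: mult_nonpos_nonneg)
next
  case False
  then obtain d where d: "j = m + d" by (metis le_iff_add not_less)
  have c: "n \<le> 3 * j" using False assms(3) by presburger
  have "x ^ d \<le> z ^ d" using assms by (intro power_mono) auto
  hence "x ^ m * z ^ m * x ^ d \<le> x ^ m * z ^ m * z ^ d" using assms by (intro mult_left_mono) auto
  hence "z ^ m * x ^ j - x ^ m * z ^ j \<le> 0" unfolding d by (simp add: power_add algebra_simps)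
  moreover have "3 * real j - real n \<ge> 0" using c by linarith
  ultimately show ?thesis by (simp add: mult_nonneg_nonpos)
qed

lemma P_compare:
  fixes x z :: real
  assumes "0 < x" "x < z" "n \<ge> 1"
  shows "z ^ ((n+2) div 3) * P n x < x ^ ((n+2) div 3) * P n z"
proof -
  define m where "m = (n+2) div 3"
  have m1: "m \<ge> 1" using assms(3) unfolding m_def by presburger
  have "z ^ m * P n x - x ^ m * P n z = (\<Sum>j=0..n. z ^ m * ((3 * real j - real n) * x ^ j) - x ^ m * ((3 * real j - real n) * z ^ j))"
    unfolding P_def by (simp add: sum_distrib_left sum_subtractf)
  also have "\<dots> = (\<Sum>j=0..n. (3 * real j - real n) * (z ^ m * x ^ j - x ^ m * z ^ j))"
    by (rule sum.cong) (simp_all add: algebra_simps)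
  also have "\<dots> < (\<Sum>j=0..n. 0)"
  proof (rule sum_strict_mono_ex1)
    show "\<forall>j\<in>{0..n}. (3 * real j - real n) * (z ^ m * x ^ j - x ^ m * z ^ j) \<le> 0"
      using term_le[OF assms(1,2) m_def] by blast
    have "x ^ m < z ^ m" using assms m1 by (intro power_strict_mono) auto
    hence "(3 * real 0 - real n) * (z ^ m * x ^ 0 - x ^ m * z ^ 0) < 0"
      using assms(3) by (simp add: mult_neg_pos)
    thus "\<exists>j\<in>{0..n}. (3 * real j - real n) * (z ^ m * x ^ j - x ^ m * z ^ j) < 0" by force
  qed simp
  finally show ?thesis unfolding m_def by simp
qed

lemma P_unique:
  assumes "0 < a" "0 < b" "P n a = 0" "P n b = 0" "n \<ge> 1"
  shows "a = b"
proof (rule ccontr)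
  assume "a \<noteq> b"
  then consider "a < b" | "b < a" by linarith
  then show False
  proof cases
    case 1 with P_compare[OF assms(1) 1 assms(5)] assms show False by simp
  next
    case 2 with P_compare[OF assms(2) 2 assms(5)] assms show False by simp
  qed
qed

lemma pred_iff:
  assumes "x < 1"
  shows "((\<Sum>i=1..Suc n-1. x ^ i) = (real (Suc n) - 1) / 3 * (1 + 2 * x ^ Suc n)) \<longleftrightarrow> P n x = 0"
proof -
  have "((\<Sum>i=1..Suc n-1. x ^ i) = (real (Suc n) - 1) / 3 * (1 + 2 * x ^ Suc n)) \<longleftrightarrow>
        3 * (\<Sum>i=1..n. x ^ i) - real n * (1 + 2 * x ^ Suc n) = 0" by auto
  also have "\<dots> \<longleftrightarrow> P n x = 0" unfolding Fid using assms by simp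
  finally show ?thesis .
qed

lemma exp1_ge: "exp (1::real) \<ge> 169/64"
proof -
  have h: "1 + 1/2 + (1/2)\<^sup>2 / 2 \<le> exp (1/2::real)" by (rule exp_lower_Taylor_quadratic) simp
  have "exp (1::real) = exp (1/2) * exp (1/2)" by (simp flip: exp_add)
  moreover have "(13/8) * (13/8) \<le> exp (1/2::real) * exp (1/2)"
    using h by (intro mult_mono) (auto simp: power2_eq_square)
  ultimately show ?thesis by simp
qed

lemma expm1_le: "exp (-1::real) \<le> 64/169"
proof -
  have "exp (-1::real) = 1 / exp 1" by (simp add: exp_minus field_simps)
  also have "\<dots> \<le> 1 / (169/64)" using exp1_ge by (intro divide_left_mono) auto
  finally show ?thesis by simp
qed

lemma ln2_lt1: "ln (2::real) < 1"
proof -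
  have "(2::real) < exp 1" using exp1_ge by linarith
  hence "ln (2::real) < ln (exp 1)" by (subst ln_less_cancel_iff) auto
  thus ?thesis by simp
qed

lemma pow_bound:
  assumes "n \<ge> 1"
  shows "(1 - 1 / real n) ^ n \<le> exp (-1)"
proof -
  have "1 - 1 / real n \<le> exp (- (1 / real n))" using exp_ge_add_one_self[of "- (1 / real n)"] by simp
  moreover have "0 \<le> 1 - 1 / real n" using assms by (simp add: field_simps)
  ultimately have "(1 - 1 / real n) ^ n \<le> exp (- (1 / real n)) ^ n" by (intro power_mono) auto
  also have "\<dots> = exp (real n * (- (1 / real n)))" by (simp only: exp_of_nat_mult)
  also have "\<dots> = exp (-1)" using assms by simp
  finally show ?thesis .
qed

lemma P_sq: "(1 - x)\<^sup>2 * P n x = 3 * (x - x ^ Suc n) - real n * (1 - x) * (1 + 2 * x ^ Suc n)"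
proof -
  have "(1 - x)\<^sup>2 * P n x = (1 - x) * ((1 - x) * P n x)" by (simp add: power2_eq_square)
  also have "\<dots> = (1 - x) * (3 * (\<Sum>i=1..n. x ^ i) - real n * (1 + 2 * x ^ Suc n))" by (simp only: Fid)
  also have "\<dots> = 3 * ((1 - x) * (\<Sum>i=1..n. x ^ i)) - real n * (1 - x) * (1 + 2 * x ^ Suc n)" by algebra
  also have "\<dots> = 3 * (x - x ^ Suc n) - real n * (1 - x) * (1 + 2 * x ^ Suc n)" by (simp only: geo)
  finally show ?thesis .
qed

lemma rho_bounds:
  assumes n: "n \<ge> 100"
  shows "1 - 4 / real n \<le> rho (Suc n) \<and> rho (Suc n) \<le> 1 - 1 / real n"
proof -
  define a where "a = 1 - 4 / real n"
  define b where "b = 1 - 1 / real n"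
  have nr: "real n \<ge> 100" using n by simp
  have a0: "a \<ge> 24/25" unfolding a_def using nr by (simp add: field_simps)
  have b0: "b \<ge> 99/100" unfolding b_def using nr by (simp add: field_simps)
  have a1: "a < 1" "b < 1" unfolding a_def b_def using nr by auto
  have ab: "a \<le> b" unfolding a_def b_def using nr by (simp add: field_simps)
  have Pa: "P n a < 0"
  proof -
    have na: "real n * (1 - a) = 4" unfolding a_def using nr by (simp add: field_simps)
    have "a ^ Suc n \<ge> 0" using a0 by simp
    hence "3 * (a - a ^ Suc n) - real n * (1 - a) * (1 + 2 * a ^ Suc n) < 0"
      unfolding na using a1 by simp
    hence "(1 - a)\<^sup>2 * P n a < 0" by (simp only: P_sq)
    thus ?thesis using a1 by (simp add: mult_less_0_iff)
  qed
  have Pb: "P n b > 0"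
  proof -
    have nb: "real n * (1 - b) = 1" unfolding b_def using nr by (simp add: field_simps)
    have "b ^ n \<le> 64/169" using pow_bound[of n] expm1_le n unfolding b_def by simp
    hence hb: "b * b ^ n \<le> b * (64/169)" using b0 by (intro mult_left_mono) auto
    have "3 * (b - b ^ Suc n) - real n * (1 - b) * (1 + 2 * b ^ Suc n) = 3 * b - 1 - 5 * (b * b ^ n)"
    proof -
      have e1: "real n * (1 - b) * (1 + 2 * b ^ Suc n) = 1 + 2 * b ^ Suc n" by (simp only: nb mult_1_left)
      have e2: "b ^ Suc n = b * b ^ n" by simp
      show ?thesis unfolding e1 unfolding e2 by (simp add: algebra_simps)
    qed
    hence "3 * (b - b ^ Suc n) - real n * (1 - b) * (1 + 2 * b ^ Suc n) > 0"
      using hb b0 by linarith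
    hence "(1 - b)\<^sup>2 * P n b > 0" by (simp only: P_sq)
    thus ?thesis using a1 by (simp add: zero_less_mult_iff)
  qed
  have "continuous_on {a..b} (P n)" unfolding P_def by (intro continuous_intros)
  then obtain r where r: "a \<le> r" "r \<le> b" "P n r = 0"
    using IVT'[of "P n" a 0 b] Pa Pb ab by auto
  have r01: "0 < r" "r < 1" using r a0 a1 by auto
  have "rho (Suc n) = r"
    unfolding rho_def
  proof (rule the_equality)
    show "0 < r \<and> r < 1 \<and> (\<Sum>i = 1..Suc n - 1. r ^ i) = (real (Suc n) - 1) / 3 * (1 + 2 * r ^ Suc n)"
      using r01 r pred_iff by blast
  next
    fix x assume "0 < x \<and> x < 1 \<and> (\<Sum>i = 1..Suc n - 1. x ^ i) = (real (Suc n) - 1) / 3 * (1 + 2 * x ^ Suc n)"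
    hence "0 < x" "P n x = 0" using pred_iff by blast+
    thus "x = r" using P_unique[of x r n] r01 r n by auto
  qed
  thus ?thesis using r unfolding a_def b_def by simp
qed

lemma gamma_bound:
  assumes n: "n \<ge> 100"
  shows "\<bar>gamma (Suc n) - ln (real (Suc n))\<bar> \<le> 5"
proof -
  define r where "r = rho (Suc n)"
  have nr: "real n \<ge> 100" using n by simp
  have rb: "1 - 4 / real n \<le> r" "r \<le> 1 - 1 / real n" using rho_bounds[OF n] unfolding r_def by auto
  have "4 / real n \<le> 1/25" using nr by (simp add: field_simps)
  hence r12: "r \<ge> 1/2" using rb(1) by linarith
  have r1: "r < 1" using rb(2) nr by (smt (verit) divide_pos_pos)
  have r0: "r > 0" using r12 by simp
  have "r ^ Suc n \<le> r ^ n" using r0 r1 by (intro power_decreasing) auto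
  also have "\<dots> \<le> (1 - 1 / real n) ^ n" using rb r0 by (intro power_mono) auto
  also have "\<dots> \<le> 64/169" using pow_bound[of n] expm1_le n by simp
  finally have rq: "r ^ Suc n \<le> 64/169" .
  have rq0: "r ^ Suc n \<ge> 0" using r0 by simp
  have t1u: "ln (1 - r ^ Suc n) \<le> 0" using rq rq0 by simp
  have "ln (1/2) \<le> ln (1 - r ^ Suc n)" using rq by (subst ln_le_cancel_iff) auto
  hence t1l: "ln (1 - r ^ Suc n) \<ge> - ln 2" by (simp add: ln_div)
  have "1 / real n \<le> 1 - r" using rb by simp
  hence "ln (1 / real n) \<le> ln (1 - r)" using nr r1 by (subst ln_le_cancel_iff) auto
  hence t2u: "- ln (1 - r) \<le> ln (real n)" using nr by (simp add: ln_div)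
  have "1 - r \<le> 4 / real n" using rb by simp
  hence "ln (1 - r) \<le> ln (4 / real n)" using r1 nr by (subst ln_le_cancel_iff) auto
  hence t2l: "- ln (1 - r) \<ge> ln (real n) - ln 4" using nr by (simp add: ln_div)
  have ln4: "ln (4::real) = 2 * ln 2"
    using ln_realpow[of 2 2] by simp
  have lnS1: "ln (real n) \<le> ln (real (Suc n))" using nr by (subst ln_le_cancel_iff) auto
  have "ln (real (Suc n)) \<le> ln (2 * real n)" using nr by (subst ln_le_cancel_iff) auto
  hence lnS2: "ln (real (Suc n)) \<le> ln 2 + ln (real n)" using nr by (simp add: ln_mult)
  have t3u: "ln r \<le> 0" using r0 r1 by simp
  have "ln (1 / r) \<le> 1 / r - 1" using r0 by (intro ln_le_minus_one) simp
  also have "1 / r - 1 = (1 - r) * (1 / r)" using r0 by (simp add: field_simps)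
  also have "\<dots> \<le> (4 / real n) * 2"
    using rb r12 r0 r1 by (intro mult_mono) (auto simp: field_simps)
  finally have "- ln r \<le> 8 / real n" using r0 by (simp add: ln_div)
  hence "real n / 3 * (- ln r) \<le> real n / 3 * (8 / real n)" using nr by (intro mult_left_mono) auto
  hence t3l: "real n / 3 * ln r \<ge> - 8 / 3" using nr by simp
  have t3u': "real n / 3 * ln r \<le> 0" using t3u by (simp add: mult_nonneg_nonpos)
  have g: "gamma (Suc n) = ln (1 - r ^ Suc n) - ln (1 - r) - real n / 3 * ln r"
    unfolding gamma_def r_def by simp
  show ?thesis unfolding g using t1u t1l t2u t2l t3l t3u' lnS1 lnS2 ln4 ln2_lt1 by linarith
qed

theorem mainTheorem6:
  shows "(\<lambda>q. gamma q / ln (real q)) \<longlonglongrightarrow> 1"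
proof -
  have ev: "eventually (\<lambda>q. \<bar>gamma q - ln (real q)\<bar> \<le> 5) sequentially"
    unfolding eventually_sequentially
  proof (intro exI allI impI)
    fix q :: nat assume "101 \<le> q"
    then obtain n where "q = Suc n" "n \<ge> 100" by (metis Suc_le_D Suc_le_mono numeral_eq_Suc pred_numeral_simps(3))
    thus "\<bar>gamma q - ln (real q)\<bar> \<le> 5" using gamma_bound by simp
  qed
  have lim5: "(\<lambda>q. 5 / ln (real q)) \<longlonglongrightarrow> 0" by real_asymp
  have "(\<lambda>q. (gamma q - ln (real q)) / ln (real q)) \<longlonglongrightarrow> 0"
  proof (rule Lim_null_comparison[OF _ lim5])
    show "eventually (\<lambda>q. norm ((gamma q - ln (real q)) / ln (real q)) \<le> 5 / ln (real q)) sequentially"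
      using ev eventually_gt_at_top[of 1]
    proof eventually_elim
      case (elim q)
      hence "ln (real q) > 0" by simp
      thus ?case using elim by (simp add: abs_divide divide_right_mono)
    qed
  qed
  hence "(\<lambda>q. 1 + (gamma q - ln (real q)) / ln (real q)) \<longlonglongrightarrow> 1 + 0"
    by (intro tendsto_add tendsto_const)
  hence l: "(\<lambda>q. 1 + (gamma q - ln (real q)) / ln (real q)) \<longlonglongrightarrow> 1" by simp
  show ?thesis
  proof (rule Lim_transform_eventually[OF l])
    show "eventually (\<lambda>q. 1 + (gamma q - ln (real q)) / ln (real q) = gamma q / ln (real q)) sequentially"
      using eventually_gt_at_top[of 1]
    proof eventually_elim
      case (elim q)
      hence "ln (real q) > 0" by simp
      thus ?case by (simp add: field_simps)
    qed
  qed
qed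

end
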